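(* Let $w\in S_\infty$ and $i\ge1$ with $l(ws_i)=l(w)-1$, and let $D\in\mathcal P(w)$. If $\mathrm{mitosis}_i(D)\neq\emptyset$, then either $\mathrm{mitosis}_i(D)\subseteq\mathcal P(ws_i)$ or $\mathrm{mitosis}_i(D)\subseteq\mathcal P(w)$.
   Context: Permutations: $S_\infty=\bigcup_n S_n$ is generated by the simple transpositions $s_a=(a\ a{+}1)$, $a\ge 1$; $l(w)$ is the Coxeter length of $w$. A pipe dream is a finite subset $D\subset\mathbb{Z}_{>0}\times\mathbb{Z}_{>0}$; its elements $(r,c)$ are called crosses (in row $r$, column $c$). The reading word of $D$ is obtained by listing the crosses row by row from top to bottom, within each row from right to left (decreasing $c$), and recording for each cross $(r,c)$ its antidiagonal index $r+c-1$; this gives a word $(a_1,\dots,a_k)$. For $u\in S_\infty$ put $u\star s_a=us_a$ if $l(us_a)=l(u)+1$ and $u\star s_a=u$ otherwise. The Demazure product of $D$ is $\delta(D)=(\cdots((e\star s_{a_1})\star s_{a_2})\cdots)\star s_{a_k}$. For $w\in S_\infty$, $\mathcal P(w)=\{D:\delta(D)=w\}$. Mitosis: for a pipe dream $D$ and row index $i$, let $\mathrm{start}_i(D)=\min\{c\ge 1:(i,c)\notin D\}$ and $\mathcal J_i(D)=\{c<\mathrm{start}_i(D): (i+1,c)\notin D\}$. For $p\in\mathcal J_i(D)$ let $D_p=\big(D\setminus(\{(i,p)\}\cup\{(i,c):c\in\mathcal J_i(D),c<p\})\big)\cup\{(i+1,c):c\in\mathcal J_i(D),c<p\}$ (delete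 $(i,p)$ and move each cross $(i,c)$, $c\in\mathcal J_i(D)$, $c<p$, down to $(i+1,c)$). Then $\mathrm{mitosis}_i(D)=\{D_p:p\in\mathcal J_i(D)\}$ (empty if $\mathcal J_i(D)=\emptyset$). *)

theory Defs
  imports Main
begin

text \<open>Permutations of the positive integers are modelled as functions nat \<Rightarrow> nat
  (the point 0 is never moved by simple transpositions s a with a \<ge> 1).\<close>

definition s :: "nat \<Rightarrow> nat \<Rightarrow> nat" where
  "s a = (\<lambda>x. if x = a then Suc a else if x = Suc a then a else x)"

definition wordprod :: "nat list \<Rightarrow> (nat \<Rightarrow> nat)" where
  "wordprod as = foldl (\<lambda>u a. u \<circ> s a) id as"

definition Sinf :: "(nat \<Rightarrow> nat) set" where
  "Sinf = {wordprod as | as. \<forall>a\<in>set as. 1 \<le> a}"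

definition len :: "(nat \<Rightarrow> nat) \<Rightarrow> nat" where
  "len w = (LEAST k. \<exists>as. length as = k \<and> (\<forall>a\<in>set as. 1 \<le> a) \<and> wordprod as = w)"

definition dstar :: "(nat \<Rightarrow> nat) \<Rightarrow> nat \<Rightarrow> (nat \<Rightarrow> nat)" where
  "dstar u a = (if len (u \<circ> s a) = len u + 1 then u \<circ> s a else u)"

definition pipe_dream :: "(nat \<times> nat) set \<Rightarrow> bool" where
  "pipe_dream D \<longleftrightarrow> finite D \<and> (\<forall>(r,c)\<in>D. 0 < r \<and> 0 < c)"

definition reading_word :: "(nat \<times> nat) set \<Rightarrow> nat list" where
  "reading_word D = concat (map (\<lambda>r. map (\<lambda>c. r + c - 1)
       (rev (sorted_list_of_set {c. (r, c) \<in> D})))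
     [1..<Suc (Max (insert 0 (fst ` D)))])"

definition demazure :: "(nat \<times> nat) set \<Rightarrow> (nat \<Rightarrow> nat)" where
  "demazure D = foldl dstar id (reading_word D)"

definition PD :: "(nat \<Rightarrow> nat) \<Rightarrow> (nat \<times> nat) set set" where
  "PD w = {D. pipe_dream D \<and> demazure D = w}"

definition start :: "nat \<Rightarrow> (nat \<times> nat) set \<Rightarrow> nat" where
  "start i D = (LEAST c. 1 \<le> c \<and> (i, c) \<notin> D)"

definition Jset :: "nat \<Rightarrow> (nat \<times> nat) set \<Rightarrow> nat set" where
  "Jset i D = {c. 1 \<le> c \<and> c < start i D \<and> (Suc i, c) \<notin> D}"

definition Dp :: "nat \<Rightarrow> (nat \<times> nat) set \<Rightarrow> nat \<Rightarrow> (nat \<times> nat) set" where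
  "Dp i D p = (D - ({(i, p)} \<union> {(i, c) | c. c \<in> Jset i D \<and> c < p}))
               \<union> {(Suc i, c) | c. c \<in> Jset i D \<and> c < p}"

definition mitosis :: "nat \<Rightarrow> (nat \<times> nat) set \<Rightarrow> (nat \<times> nat) set set" where
  "mitosis i D = Dp i D ` Jset i D"

end

theory Submission
  imports Defs
begin


definition h :: "(nat \<Rightarrow> nat) \<Rightarrow> nat \<Rightarrow> (nat \<Rightarrow> nat)" where
  "h u a = (if u a < u (Suc a) then u \<circ> s a else u)"

lemma h_idem: "h (h u a) a = h u a"
  by (auto simp: h_def s_def fun_eq_iff)

lemma h_comm: "Suc a < b \<Longrightarrow> h (h u a) b = h (h u b) a"
  by (auto simp: h_def s_def fun_eq_iff)

lemma h_braid: "h (h (h u a) (Suc a)) a = h (h (h u (Suc a)) a) (Suc a)"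
  unfolding h_def s_def fun_eq_iff
  by (auto split: if_splits)




definition eqw :: "nat list \<Rightarrow> nat list \<Rightarrow> bool" (infix "\<approx>" 50) where
  "xs \<approx> ys \<longleftrightarrow> (\<forall>u. foldl h u xs = foldl h u ys)"

lemma eqw_refl[simp]: "xs \<approx> xs" by (simp add: eqw_def)
lemma eqw_sym: "xs \<approx> ys \<Longrightarrow> ys \<approx> xs" by (simp add: eqw_def)
lemma eqw_trans[trans]: "xs \<approx> ys \<Longrightarrow> ys \<approx> zs \<Longrightarrow> xs \<approx> zs" by (simp add: eqw_def)
lemma eqw_app: "xs \<approx> ys \<Longrightarrow> as @ xs @ bs \<approx> as @ ys @ bs" by (simp add: eqw_def)
lemma eqw_appL: "xs \<approx> ys \<Longrightarrow> as @ xs \<approx> as @ ys" by (simp add: eqw_def)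
lemma eqw_appR: "xs \<approx> ys \<Longrightarrow> xs @ bs \<approx> ys @ bs" by (simp add: eqw_def)
lemma eqw_Cons: "xs \<approx> ys \<Longrightarrow> x # xs \<approx> x # ys" by (simp add: eqw_def)

definition far :: "nat \<Rightarrow> nat \<Rightarrow> bool" where "far x y \<longleftrightarrow> Suc x < y \<or> Suc y < x"

lemma comm2: "far x c \<Longrightarrow> [x, c] \<approx> [c, x]"
  using h_comm[of x c] h_comm[of c x] by (auto simp: eqw_def far_def)

lemma comm1: "\<forall>x\<in>set xs. far x c \<Longrightarrow> xs @ [c] \<approx> c # xs"
proof (induction xs)
  case Nil then show ?case by simp
next
  case (Cons x xs)
  have "(x # xs) @ [c] = [x] @ (xs @ [c]) @ []" by simp
  also have "\<dots> \<approx> [x] @ (c # xs) @ []" using Cons by (intro eqw_app) auto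
  also have "[x] @ (c # xs) @ [] = [] @ [x, c] @ xs" by simp
  also have "\<dots> \<approx> [] @ [c, x] @ xs" using Cons by (intro eqw_app comm2) auto
  finally show ?case by simp
qed

lemma commL: "\<forall>x\<in>set xs. \<forall>y\<in>set ys. far x y \<Longrightarrow> xs @ ys \<approx> ys @ xs"
proof (induction ys)
  case Nil then show ?case by simp
next
  case (Cons y ys)
  have "xs @ (y # ys) = [] @ (xs @ [y]) @ ys" by simp
  also have "\<dots> \<approx> [] @ (y # xs) @ ys" using Cons by (intro eqw_app comm1) auto
  also have "[] @ (y # xs) @ ys = [y] @ (xs @ ys) @ []" by simp
  also have "\<dots> \<approx> [y] @ (ys @ xs) @ []" using Cons by (intro eqw_app) auto
  finally show ?case by simp
qed

lemma braidw: "[a, Suc a, a] \<approx> [Suc a, a, Suc a]"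
  using h_braid by (auto simp: eqw_def)

definition down :: "nat \<Rightarrow> nat \<Rightarrow> nat list" where "down a b = rev [a..<b]"

lemma down_split: "a \<le> m \<Longrightarrow> m \<le> b \<Longrightarrow> down a b = down m b @ down a m"
  unfolding down_def using upt_add_eq_append[of a m "b - m"] by simp

lemma set_down[simp]: "set (down a b) = {a..<b}" by (simp add: down_def)

lemma down_empty[simp]: "down a a = []" by (simp add: down_def)

lemma down_Suc: "a \<le> b \<Longrightarrow> down a (Suc b) = b # down a b"
  by (simp add: down_def)

lemma slide1:
  assumes "a < c" "c < b"
  shows "down a b @ [c] \<approx> (c - 1) # down a b"
proof -
  obtain d where d: "c = Suc d" using assms by (cases c) auto
  have sp: "down a b = down (Suc c) b @ [c, d] @ down a d"
    using assms d down_split[of a d b] down_split[of d "Suc c" b] down_Suc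
    by (simp add: down_Suc down_split[of "Suc d" "Suc (Suc d)" b])
  have "down a b @ [c] = (down (Suc c) b @ [c, d]) @ (down a d @ [c]) @ []" using sp by simp
  also have "\<dots> \<approx> (down (Suc c) b @ [c, d]) @ (c # down a d) @ []"
    by (intro eqw_app comm1) (auto simp: far_def d)
  also have "\<dots> = down (Suc c) b @ [c, d, c] @ down a d" by simp
  also have "\<dots> \<approx> down (Suc c) b @ [d, c, d] @ down a d"
    using braidw[of d] d eqw_sym by (intro eqw_app) auto
  also have "\<dots> = [] @ (down (Suc c) b @ [d]) @ ([c, d] @ down a d)" by simp
  also have "\<dots> \<approx> [] @ (d # down (Suc c) b) @ ([c, d] @ down a d)"
    by (intro eqw_app comm1) (auto simp: far_def d)
  also have "\<dots> = (c - 1) # down a b" using sp d by simp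
  finally show ?thesis .
qed

lemma slideL:
  "\<forall>c\<in>set L. a < c \<and> c < b \<Longrightarrow> down a b @ L \<approx> map (\<lambda>x. x - 1) L @ down a b"
proof (induction L)
  case Nil then show ?case by simp
next
  case (Cons c L)
  have "down a b @ (c # L) = [] @ (down a b @ [c]) @ L" by simp
  also have "\<dots> \<approx> [] @ ((c - 1) # down a b) @ L" using Cons by (intro eqw_app slide1) auto
  also have "\<dots> = [c - 1] @ (down a b @ L) @ []" by simp
  also have "\<dots> \<approx> [c - 1] @ (map (\<lambda>x. x - 1) L @ down a b) @ []" using Cons by (intro eqw_app) auto
  finally show ?case by simp
qed




lemma s_s[simp]: "s a (s a x) = x" by (simp add: s_def)
lemma s_comp_s: "s a \<circ> s a = id" by (simp add: fun_eq_iff)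
lemma inj_s: "inj (s a)" by (metis inj_on_inverseI s_s)
lemma bij_s: "bij (s a)" by (metis bij_betw_imageI inj_s o_bij s_comp_s)

lemma wordprod_snoc: "wordprod (as @ [a]) = wordprod as \<circ> s a"
  by (simp add: wordprod_def)
lemma wordprod_Nil[simp]: "wordprod [] = id" by (simp add: wordprod_def)

definition good :: "(nat \<Rightarrow> nat) \<Rightarrow> bool" where
  "good u \<longleftrightarrow> bij u \<and> u 0 = 0 \<and> (\<exists>N. \<forall>x\<ge>N. u x = x)"

lemma good_id: "good id" by (auto simp: good_def)

lemma good_comp: "good u \<Longrightarrow> 1 \<le> a \<Longrightarrow> good (u \<circ> s a)"
  unfolding good_def
proof (elim conjE exE, intro conjI)
  fix N assume "bij u" "u 0 = 0" "\<forall>x\<ge>N. u x = x" "1 \<le> a"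
  then show "bij (u \<circ> s a)" using bij_s bij_comp by blast
  show "(u \<circ> s a) 0 = 0" using \<open>u 0 = 0\<close> \<open>1 \<le> a\<close> by (simp add: s_def)
  show "\<exists>N. \<forall>x\<ge>N. (u \<circ> s a) x = x"
    using \<open>\<forall>x\<ge>N. u x = x\<close> by (intro exI[of _ "N + a + 2"]) (auto simp: s_def)
qed

lemma good_wordprod: "\<forall>a\<in>set as. 1 \<le> a \<Longrightarrow> good (wordprod as)"
  by (induction as rule: rev_induct) (auto simp: good_id wordprod_snoc good_comp)

lemma Sinf_good: "u \<in> Sinf \<Longrightarrow> good u"
  by (auto simp: Sinf_def good_wordprod)

lemma Sinf_comp: "u \<in> Sinf \<Longrightarrow> 1 \<le> a \<Longrightarrow> u \<circ> s a \<in> Sinf"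
proof -
  assume "u \<in> Sinf" "1 \<le> a"
  then obtain as where "u = wordprod as" "\<forall>a\<in>set as. 1 \<le> a" by (auto simp: Sinf_def)
  then show ?thesis using \<open>1 \<le> a\<close> unfolding Sinf_def
    by (intro CollectI exI[of _ "as @ [a]"]) (auto simp: wordprod_snoc)
qed

definition Inv :: "(nat \<Rightarrow> nat) \<Rightarrow> (nat \<times> nat) set" where
  "Inv u = {(x, y). x < y \<and> u y < u x}"

definition ninv :: "(nat \<Rightarrow> nat) \<Rightarrow> nat" where "ninv u = card (Inv u)"

lemma finite_Inv: assumes "good u" shows "finite (Inv u)"
proof -
  from assms obtain N where N: "\<forall>x\<ge>N. u x = x" and i: "inj u" by (auto simp: good_def bij_def)
  have "Inv u \<subseteq> {..<N} \<times> {..<N}"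
  proof
    fix p assume "p \<in> Inv u"
    then obtain x y where p: "p = (x, y)" "x < y" "u y < u x" by (auto simp: Inv_def)
    have "y < N"
    proof (rule ccontr)
      assume "\<not> y < N"
      then have "u y = y" using N by auto
      then have "N \<le> u x" using p \<open>\<not> y < N\<close> by auto
      then have "u (u x) = u x" using N by auto
      then have "u x = x" using i by (auto dest: injD)
      then show False using p \<open>u y = y\<close> by auto
    qed
    then show "p \<in> {..<N} \<times> {..<N}" using p by auto
  qed
  then show ?thesis by (rule finite_subset) auto
qed

lemma s_mono:
  assumes "x < y" "(x, y) \<noteq> (a, Suc a)"
  shows "s a x < s a y"
  using assms by (auto simp: s_def)



lemma s_eq1: "s a x = a \<longleftrightarrow> x = Suc a" by (simp add: s_def)
lemma s_eq2: "s a x = Suc a \<longleftrightarrow> x = a" by (simp add: s_def)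
lemma s_pair: "x < y \<Longrightarrow> (s a x, s a y) \<noteq> (a, Suc a)" by (simp add: s_eq1 s_eq2)

lemma Inv_comp:
  assumes "inj u"
  shows "Inv (u \<circ> s a) - {(a, Suc a)} = (\<lambda>(x,y). (s a x, s a y)) ` (Inv u - {(a, Suc a)})"
proof -
  let ?g = "\<lambda>(x,y). (s a x, s a y)"
  have 1: "?g p \<in> Inv u - {(a, Suc a)}" if "p \<in> Inv (u \<circ> s a) - {(a, Suc a)}" for p
  proof -
    obtain x y where p: "p = (x,y)" by force
    with that have "x < y" "u (s a y) < u (s a x)" "(x,y) \<noteq> (a, Suc a)" by (auto simp: Inv_def)
    moreover have "s a x < s a y" using calculation s_mono by blast
    moreover have "(s a x, s a y) \<noteq> (a, Suc a)" using \<open>x < y\<close> by (rule s_pair)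
    ultimately show ?thesis using p by (auto simp: Inv_def)
  qed
  have 2: "?g p \<in> Inv (u \<circ> s a) - {(a, Suc a)}" if "p \<in> Inv u - {(a, Suc a)}" for p
  proof -
    obtain x y where p: "p = (x,y)" by force
    with that have "x < y" "u y < u x" "(x,y) \<noteq> (a, Suc a)" by (auto simp: Inv_def)
    moreover have "s a x < s a y" using calculation s_mono by blast
    moreover have "(s a x, s a y) \<noteq> (a, Suc a)" using \<open>x < y\<close> by (rule s_pair)
    ultimately show ?thesis using p by (auto simp: Inv_def)
  qed
  have gg: "?g (?g p) = p" for p by (cases p) auto
  show ?thesis
  proof
    show "Inv (u \<circ> s a) - {(a, Suc a)} \<subseteq> ?g ` (Inv u - {(a, Suc a)})"
    proof
      fix p assume "p \<in> Inv (u \<circ> s a) - {(a, Suc a)}"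
      then have "?g p \<in> Inv u - {(a, Suc a)}" "p = ?g (?g p)" using 1 gg by auto
      then show "p \<in> ?g ` (Inv u - {(a, Suc a)})" by (rule rev_image_eqI)
    qed
    show "?g ` (Inv u - {(a, Suc a)}) \<subseteq> Inv (u \<circ> s a) - {(a, Suc a)}"
      using 2 by auto
  qed
qed

lemma inv_comp:
  assumes "good u"
  shows "ninv (u \<circ> s a) = (if u a < u (Suc a) then ninv u + 1 else ninv u - 1)"
proof -
  have i: "inj u" using assms using assms bij_is_inj good_def by blast
  let ?g = "\<lambda>(x,y). (s a x, s a y)"
  have ig: "inj ?g" by (rule injI) (auto simp: inj_eq[OF inj_s])
  have fu: "finite (Inv u)" using finite_Inv assms by blast
  have ga: "good (u \<circ> s a)" if "1 \<le> a" using good_comp assms that by blast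
  have fv: "finite (Inv (u \<circ> s a))"
  proof -
    have "Inv (u \<circ> s a) \<subseteq> insert (a, Suc a) (?g ` Inv u)"
      using Inv_comp[OF i, of a] by auto
    then show ?thesis using fu by (meson finite_imageI finite_insert finite_subset)
  qed
  have eq: "card (Inv (u \<circ> s a) - {(a, Suc a)}) = card (Inv u - {(a, Suc a)})"
    using Inv_comp[OF i, of a] card_image[OF inj_on_subset[OF ig]] by simp
  have ne: "u a \<noteq> u (Suc a)" using i by (metis inj_eq n_not_Suc_n)
  show ?thesis
  proof (cases "u a < u (Suc a)")
    case True
    then have "(a, Suc a) \<in> Inv (u \<circ> s a)" "(a, Suc a) \<notin> Inv u"
      by (auto simp: Inv_def s_def)
    moreover have "card (Inv (u \<circ> s a)) > 0" using calculation fv card_gt_0_iff by blast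
    ultimately show ?thesis using True eq fv fu unfolding ninv_def
      by (simp add: card_Diff_singleton_if)
  next
    case False
    then have "(a, Suc a) \<notin> Inv (u \<circ> s a)" "(a, Suc a) \<in> Inv u"
      using ne by (auto simp: Inv_def s_def)
    then show ?thesis using False eq fv fu unfolding ninv_def
      by (simp add: card_Diff_singleton_if)
  qed
qed




lemma Inv_id: "Inv id = {}" by (auto simp: Inv_def)

lemma ninv_wordprod_le: "\<forall>a\<in>set as. 1 \<le> a \<Longrightarrow> ninv (wordprod as) \<le> length as"
proof (induction as rule: rev_induct)
  case Nil then show ?case using Inv_id by (simp add: ninv_def id_def)
next
  case (snoc a as)
  then have g: "good (wordprod as)" by (intro good_wordprod) auto
  have "ninv (wordprod as \<circ> s a) \<le> ninv (wordprod as) + 1" using inv_comp[OF g, of a] by (auto split: if_splits)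
  moreover have "ninv (wordprod (as @ [a])) = ninv (wordprod as \<circ> s a)" by (simp only: wordprod_snoc)
  moreover have "ninv (wordprod as) \<le> length as" using snoc by simp
  ultimately show ?case by simp
qed

lemma ninv0_id:
  assumes g: "good u" and z: "ninv u = 0"
  shows "u = id"
proof -
  have i: "inj u" and su: "surj u" using g by (auto simp: good_def bij_def)
  have "Inv u = {}" using z finite_Inv[OF g] by (simp add: ninv_def)
  then have le: "x < y \<Longrightarrow> u x \<le> u y" for x y unfolding Inv_def by (metis (mono_tags, lifting) case_prodI empty_iff mem_Collect_eq not_le)
  have sm: "strict_mono u"
  proof (rule strict_monoI)
    fix x y :: nat assume "x < y"
    then have "u x \<le> u y" "u x \<noteq> u y" using le i by (auto dest: injD)
    then show "u x < u y" by simp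
  qed
  have "u x = x" for x
  proof (induction x rule: less_induct)
    case (less x)
    obtain z where z: "u z = x" using su by (metis surjD)
    have "\<not> z < x" using less z by force
    then have "u x \<le> u z" using sm by (simp add: strict_mono_less_eq)
    moreover have "x \<le> u x" using strict_mono_imp_increasing[OF sm] .
    ultimately show ?case using z by simp
  qed
  then show ?thesis by auto
qed

lemma descent:
  assumes g: "good u" and p: "0 < ninv u"
  shows "\<exists>a. 1 \<le> a \<and> u (Suc a) < u a"
proof (rule ccontr)
  assume "\<not> ?thesis"
  then have A: "a \<ge> 1 \<Longrightarrow> u a \<le> u (Suc a)" for a by force
  have i: "inj u" and u0: "u 0 = 0" using g by (auto simp: good_def bij_def)
  have "u a < u (Suc a)" for a
  proof (cases a)
    case 0
    then show ?thesis using u0 i by (metis inj_eq gr0I nat.distinct(1))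
  next
    case (Suc b)
    then show ?thesis using A[of a] i by (metis inj_eq le_neq_implies_less n_not_Suc_n Suc_le_mono le0 One_nat_def)
  qed
  then have "strict_mono u" by (simp add: strict_mono_Suc_iff)
  then have "Inv u = {}" by (auto simp: Inv_def strict_mono_less dest: strict_monoD)
  then show False using p by (simp add: ninv_def)
qed

lemma word_exists:
  "u \<in> Sinf \<Longrightarrow> ninv u = n \<Longrightarrow> \<exists>as. length as = n \<and> (\<forall>a\<in>set as. 1 \<le> a) \<and> wordprod as = u"
proof (induction n arbitrary: u)
  case 0
  then have "u = id" using ninv0_id Sinf_good by blast
  then show ?case by (intro exI[of _ "[]"]) simp
next
  case (Suc n)
  have g: "good u" using Suc Sinf_good by blast
  obtain a where a: "1 \<le> a" "u (Suc a) < u a" using descent[OF g] Suc by auto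
  have "ninv (u \<circ> s a) = n" using inv_comp[OF g, of a] a Suc by simp
  moreover have "u \<circ> s a \<in> Sinf" using Sinf_comp Suc a by blast
  ultimately obtain as where as: "length as = n" "\<forall>a\<in>set as. 1 \<le> a" "wordprod as = u \<circ> s a"
    using Suc by blast
  have "wordprod (as @ [a]) = u" using as by (simp add: wordprod_snoc comp_assoc s_comp_s)
  then show ?case using as a by (intro exI[of _ "as @ [a]"]) auto
qed

lemma len_eq: assumes "u \<in> Sinf" shows "len u = ninv u"
proof -
  obtain as where as: "length as = ninv u" "\<forall>a\<in>set as. 1 \<le> a" "wordprod as = u"
    using word_exists assms by blast
  let ?P = "\<lambda>k. \<exists>as. length as = k \<and> (\<forall>a\<in>set as. 1 \<le> a) \<and> wordprod as = u"
  have "?P (ninv u)" using as by blast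
  then have le: "len u \<le> ninv u" unfolding len_def by (rule Least_le)
  have "?P (len u)" unfolding len_def using \<open>?P (ninv u)\<close> by (rule LeastI)
  then obtain bs where "length bs = len u" "\<forall>a\<in>set bs. 1 \<le> a" "wordprod bs = u" by blast
  then have "ninv u \<le> len u" using ninv_wordprod_le by metis
  then show ?thesis using le by simp
qed

lemma dstar_h:
  assumes "u \<in> Sinf" "1 \<le> a"
  shows "dstar u a = h u a"
proof -
  have g: "good u" using assms Sinf_good by blast
  have i: "inj u" using g bij_is_inj good_def by blast
  have ne: "u a \<noteq> u (Suc a)" using i by (metis inj_eq n_not_Suc_n)
  have "len (u \<circ> s a) = ninv (u \<circ> s a)" using len_eq Sinf_comp assms by blast
  moreover have "len u = ninv u" using len_eq assms by blast
  moreover have "\<not> u a < u (Suc a) \<Longrightarrow> ninv u > 0"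
  proof -
    assume "\<not> u a < u (Suc a)"
    then have "(a, Suc a) \<in> Inv u" using ne by (auto simp: Inv_def)
    then show "ninv u > 0" using finite_Inv[OF g] card_gt_0_iff unfolding ninv_def by blast
  qed
  ultimately show ?thesis using inv_comp[OF g, of a] unfolding dstar_def h_def by auto
qed

lemma h_Sinf: "u \<in> Sinf \<Longrightarrow> 1 \<le> a \<Longrightarrow> h u a \<in> Sinf"
  unfolding h_def using Sinf_comp by auto

lemma foldl_dstar_h:
  "u \<in> Sinf \<Longrightarrow> \<forall>a\<in>set ws. 1 \<le> a \<Longrightarrow> foldl dstar u ws = foldl h u ws"
  by (induction ws arbitrary: u) (auto simp: dstar_h h_Sinf)




definition desc :: "nat set \<Rightarrow> nat list" where "desc S = rev (sorted_list_of_set S)"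

lemma desc_union:
  assumes "finite A" "finite B" "\<forall>x\<in>A. \<forall>y\<in>B. y < x"
  shows "desc (A \<union> B) = desc A @ desc B"
proof -
  have "sorted_list_of_set (A \<union> B) = sorted_list_of_set B @ sorted_list_of_set A"
  proof (rule sorted_distinct_set_unique)
    show "sorted (sorted_list_of_set B @ sorted_list_of_set A)"
      unfolding sorted_append using assms by (simp add: less_imp_le)
    show "distinct (sorted_list_of_set B @ sorted_list_of_set A)"
      unfolding distinct_append using assms by (simp add: disjoint_iff) (meson less_asym')
    show "set (sorted_list_of_set (A \<union> B)) = set (sorted_list_of_set B @ sorted_list_of_set A)"
      using assms by (simp add: Un_commute)
  qed simp_all
  then show ?thesis by (simp add: desc_def)
qed

lemma set_desc[simp]: "finite A \<Longrightarrow> set (desc A) = A" by (simp add: desc_def)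

lemma map_upt_shift1: "1 \<le> a \<Longrightarrow> map (\<lambda>c. r + c - 1) [a..<b] = [r + a - 1..<r + b - 1]"
proof (induction b)
  case 0 then show ?case by simp
next
  case (Suc b)
  show ?case
  proof (cases "a \<le> b")
    case True
    have e: "r + Suc b - 1 = Suc (r + b - 1)" using True Suc.prems by simp
    have "[r + a - 1..<r + Suc b - 1] = [r + a - 1..<r + b - 1] @ [r + b - 1]"
      unfolding e using True by (simp add: upt_Suc_append)
    then show ?thesis using Suc True by simp
  next
    case False
    then show ?thesis by simp
  qed
qed

lemma map_upt_shift2: "map (\<lambda>c. r + c) [a..<b] = [r + a..<r + b]"
  by (induction b) auto

lemma desc_range: "desc {a..<b} = rev [a..<b]" by (simp add: desc_def)

definition L1 :: "nat \<Rightarrow> nat set \<Rightarrow> nat list" where "L1 i X = map (\<lambda>c. i + c - 1) (desc X)"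
definition L2 :: "nat \<Rightarrow> nat set \<Rightarrow> nat list" where "L2 i X = map (\<lambda>c. i + c) (desc X)"

lemma L1_range: "1 \<le> a \<Longrightarrow> L1 i {a..<b} = down (i + a - 1) (i + b - 1)"
  using map_upt_shift1[of a i b] by (simp add: L1_def desc_range down_def rev_map[symmetric])

lemma L2_range: "L2 i {a..<b} = down (i + a) (i + b)"
  by (simp add: L2_def desc_range down_def rev_map[symmetric] map_upt_shift2)

lemma L1_union: "finite A \<Longrightarrow> finite B \<Longrightarrow> \<forall>x\<in>A. \<forall>y\<in>B. y < x \<Longrightarrow> L1 i (A \<union> B) = L1 i A @ L1 i B"
  by (simp add: L1_def desc_union)
lemma L2_union: "finite A \<Longrightarrow> finite B \<Longrightarrow> \<forall>x\<in>A. \<forall>y\<in>B. y < x \<Longrightarrow> L2 i (A \<union> B) = L2 i A @ L2 i B"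
  by (simp add: L2_def desc_union)

lemma set_L1: "finite A \<Longrightarrow> set (L1 i A) = (\<lambda>c. i + c - 1) ` A" by (simp add: L1_def)
lemma set_L2: "finite A \<Longrightarrow> set (L2 i A) = (\<lambda>c. i + c) ` A" by (simp add: L2_def)

lemma map_L2: "map (\<lambda>x. x - 1) (L2 i A) = L1 i A" by (simp add: L1_def L2_def)

lemma commS: "\<forall>x\<in>set xs. \<forall>y\<in>set ys. far x y \<Longrightarrow> as @ xs @ ys @ bs \<approx> as @ ys @ xs @ bs"
proof -
  assume "\<forall>x\<in>set xs. \<forall>y\<in>set ys. far x y"
  from eqw_app[OF commL[OF this], of as bs] show ?thesis by simp
qed

lemma cancel: "xs \<approx> ys \<Longrightarrow> as @ xs @ bs \<approx> as @ ys @ bs" by (rule eqw_app)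




lemma core1:
  assumes fA: "finite A" and fB: "finite B" and A: "\<forall>c\<in>A. 1 \<le> c \<and> c < p" and B: "\<forall>c\<in>B. p < c"
  shows "down i (i+p) @ L2 i B @ L2 i A \<approx> L1 i A @ L2 i B @ down i (i+p)"
proof -
  have "down i (i+p) @ L2 i B @ L2 i A = [] @ down i (i+p) @ L2 i B @ L2 i A" by simp
  also have "\<dots> \<approx> [] @ L2 i B @ down i (i+p) @ L2 i A"
    by (rule commS) (use B fB in \<open>force simp: far_def set_L2\<close>)
  also have "\<dots> = L2 i B @ (down i (i+p) @ L2 i A) @ []" by simp
  also have "\<dots> \<approx> L2 i B @ (map (\<lambda>x. x - 1) (L2 i A) @ down i (i+p)) @ []"
    by (intro cancel slideL) (use A fA in \<open>auto simp: set_L2\<close>)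
  also have "\<dots> = [] @ L2 i B @ L1 i A @ down i (i+p)" using map_L2[of i] by simp
  also have "\<dots> \<approx> [] @ L1 i A @ L2 i B @ down i (i+p)"
    by (rule commS) (use A B fA fB in \<open>force simp: far_def set_L2 set_L1\<close>)
  finally show ?thesis by simp
qed

lemma core2:
  assumes fA: "finite A" and fM: "finite M" and fC: "finite C"
    and A: "\<forall>c\<in>A. 1 \<le> c \<and> c < p" and M: "\<forall>c\<in>M. p < c \<and> c < q" and C: "\<forall>c\<in>C. q < c"
  shows "down (i+p) (i+q) @ L1 i A @ L2 i C @ L2 i M \<approx> L1 i M @ L1 i A @ L2 i C @ down (i+p) (i+q)"
proof -
  let ?B = "down (i+p) (i+q)"
  have "?B @ L1 i A @ L2 i C @ L2 i M = [] @ ?B @ L1 i A @ (L2 i C @ L2 i M)" by simp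
  also have "\<dots> \<approx> [] @ L1 i A @ ?B @ (L2 i C @ L2 i M)"
    by (rule commS) (use A fA in \<open>force simp: far_def set_L1\<close>)
  also have "\<dots> = (L1 i A @ ?B) @ L2 i C @ L2 i M @ []" by simp
  also have "\<dots> \<approx> (L1 i A @ ?B) @ L2 i M @ L2 i C @ []"
    by (rule commS) (use M C fM fC in \<open>force simp: far_def set_L2\<close>)
  also have "\<dots> = L1 i A @ (?B @ L2 i M) @ L2 i C" by simp
  also have "\<dots> \<approx> L1 i A @ (map (\<lambda>x. x - 1) (L2 i M) @ ?B) @ L2 i C"
    by (intro cancel slideL) (use M fM in \<open>auto simp: set_L2\<close>)
  also have "\<dots> = L1 i A @ L1 i M @ ?B @ L2 i C" using map_L2[of i] by simp
  also have "\<dots> = (L1 i A @ L1 i M) @ ?B @ L2 i C @ []" by simp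
  also have "\<dots> \<approx> (L1 i A @ L1 i M) @ L2 i C @ ?B @ []"
    by (rule commS) (use C fC in \<open>force simp: far_def set_L2\<close>)
  also have "\<dots> = [] @ L1 i A @ L1 i M @ (L2 i C @ ?B)" by simp
  also have "\<dots> \<approx> [] @ L1 i M @ L1 i A @ (L2 i C @ ?B)"
    by (rule commS) (use A M fA fM in \<open>force simp: far_def set_L1\<close>)
  finally show ?thesis by simp
qed




lemma down_i: "down i (Suc i) = [i]" by (simp add: down_def)

lemma Kl_Kg:
  assumes "finite K" "p \<notin> K"
  shows "L2 i K = L2 i {c\<in>K. p < c} @ L2 i {c\<in>K. c < p}"
proof -
  have "K = {c\<in>K. p < c} \<union> {c\<in>K. c < p}" using assms by (auto, metis linorder_neqE_nat)
  then have "L2 i K = L2 i ({c\<in>K. p < c} \<union> {c\<in>K. c < p})" by simp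
  also have "\<dots> = L2 i {c\<in>K. p < c} @ L2 i {c\<in>K. c < p}"
    by (rule L2_union) (use assms in auto)
  finally show ?thesis .
qed

lemma rows1:
  assumes fK: "finite K" and K: "\<forall>c\<in>K. 1 \<le> c \<and> c \<le> k" and fH: "finite H" and H: "\<forall>c\<in>H. k < c"
    and p: "1 \<le> p" "p \<le> k" "p \<notin> K"
  shows "down i (i+k) @ L2 i H @ L2 i K \<approx>
         down (i+p) (i+k) @ L1 i {c\<in>K. c<p} @ L2 i H @ L2 i {c\<in>K. p<c} @ down (i+1) (i+p) @ [i]"
proof -
  let ?Kl = "{c\<in>K. c<p}" and ?Kg = "{c\<in>K. p<c}"
  have sp: "down i (i+k) = down (i+p) (i+k) @ down i (i+p)" using p by (intro down_split) auto
  have sp2: "down i (i+p) = down (i+1) (i+p) @ [i]"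
    using p down_split[of i "Suc i" "i+p"] by (simp add: down_i)
  have "down i (i+k) @ L2 i H @ L2 i K = [] @ down i (i+k) @ L2 i H @ L2 i K" by simp
  also have "\<dots> \<approx> [] @ L2 i H @ down i (i+k) @ L2 i K"
    by (rule commS) (use H fH in \<open>force simp: far_def set_L2\<close>)
  also have "\<dots> = (L2 i H @ down (i+p) (i+k)) @ (down i (i+p) @ L2 i ?Kg @ L2 i ?Kl) @ []"
    using Kl_Kg[OF fK p(3)] sp by simp
  also have "\<dots> \<approx> (L2 i H @ down (i+p) (i+k)) @ (L1 i ?Kl @ L2 i ?Kg @ down i (i+p)) @ []"
    by (intro cancel core1) (use fK K in auto)
  also have "\<dots> = [] @ L2 i H @ (down (i+p) (i+k) @ L1 i ?Kl) @ (L2 i ?Kg @ down (i+1) (i+p) @ [i])"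
    using sp2 by simp
  also have "\<dots> \<approx> [] @ (down (i+p) (i+k) @ L1 i ?Kl) @ L2 i H @ (L2 i ?Kg @ down (i+1) (i+p) @ [i])"
    by (rule commS) (use H fH fK p in \<open>force simp: far_def set_L2 set_L1\<close>)
  finally show ?thesis by simp
qed

definition Z :: "nat \<Rightarrow> nat \<Rightarrow> nat set \<Rightarrow> nat set \<Rightarrow> nat \<Rightarrow> nat list" where
  "Z i k K H p = down (i+p) (i+k) @ L1 i {c\<in>K. c<p} @ L2 i H @ L2 i {c\<in>K. p<c} @ down (i+1) (i+p)"

lemma Z_H:
  assumes fK: "finite K" and K: "\<forall>c\<in>K. 1 \<le> c \<and> c \<le> k" and fH: "finite H" and H: "\<forall>c\<in>H. k < c"
    and p: "1 \<le> p" "p \<le> k"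
  shows "Z i k K H p \<approx> L2 i H @ down (i+p) (i+k) @ L1 i {c\<in>K. c<p} @ L2 i {c\<in>K. p<c} @ down (i+1) (i+p)"
proof -
  have "Z i k K H p = [] @ (down (i+p) (i+k) @ L1 i {c\<in>K. c<p}) @ L2 i H @ (L2 i {c\<in>K. p<c} @ down (i+1) (i+p))"
    by (simp add: Z_def)
  also have "\<dots> \<approx> [] @ L2 i H @ (down (i+p) (i+k) @ L1 i {c\<in>K. c<p}) @ (L2 i {c\<in>K. p<c} @ down (i+1) (i+p))"
    by (rule commS) (use H fH fK p in \<open>force simp: far_def set_L2 set_L1\<close>)
  finally show ?thesis by simp
qed

lemma rows2:
  assumes fK: "finite K" and K: "\<forall>c\<in>K. 1 \<le> c \<and> c \<le> k" and fH: "finite H" and H: "\<forall>c\<in>H. k < c"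
    and p: "1 \<le> p" "p < q" "q \<le> k" "p \<notin> K" "q \<notin> K"
  shows "Z i k K H p \<approx> Z i k K H q"
proof -
  let ?A = "{c\<in>K. c<p}" and ?M = "{c\<in>K. p<c \<and> c<q}" and ?C = "{c\<in>K. q<c}"
  let ?B = "down (i+p) (i+q)"
  have e1: "L2 i {c\<in>K. p<c} = L2 i ?C @ L2 i ?M"
  proof -
    have "{c\<in>K. p<c} = ?C \<union> ?M" using p by (auto, metis linorder_neqE_nat)
    then show ?thesis by (simp add: L2_union fK)
  qed
  have e2: "L1 i {c\<in>K. c<q} = L1 i ?M @ L1 i ?A"
  proof -
    have "{c\<in>K. c<q} = ?M \<union> ?A" using p by (auto, metis linorder_neqE_nat)
    then show ?thesis by (simp add: L1_union fK)
  qed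
  have d1: "down (i+p) (i+k) = down (i+q) (i+k) @ ?B" using p by (intro down_split) auto
  have d2: "down (i+1) (i+q) = ?B @ down (i+1) (i+p)" using p by (intro down_split) auto
  have "Z i k K H p \<approx> L2 i H @ down (i+p) (i+k) @ L1 i ?A @ L2 i {c\<in>K. p<c} @ down (i+1) (i+p)"
    using Z_H assms by simp
  also have "\<dots> = (L2 i H @ down (i+q) (i+k)) @ (?B @ L1 i ?A @ L2 i ?C @ L2 i ?M) @ down (i+1) (i+p)"
    using e1 d1 by simp
  also have "\<dots> \<approx> (L2 i H @ down (i+q) (i+k)) @ (L1 i ?M @ L1 i ?A @ L2 i ?C @ ?B) @ down (i+1) (i+p)"
    by (intro cancel core2) (use fK K p in auto)
  also have "\<dots> = L2 i H @ down (i+q) (i+k) @ L1 i {c\<in>K. c<q} @ L2 i {c\<in>K. q<c} @ down (i+1) (i+q)"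
    using e2 d2 by simp
  also have "\<dots> \<approx> Z i k K H q"
    using Z_H[of K k H q i] assms eqw_sym by simp
  finally show ?thesis .
qed




definition rowset :: "(nat \<times> nat) set \<Rightarrow> nat \<Rightarrow> nat set" where
  "rowset D r = {c. (r, c) \<in> D}"
definition roww :: "(nat \<times> nat) set \<Rightarrow> nat \<Rightarrow> nat list" where
  "roww D r = map (\<lambda>c. r + c - 1) (desc (rowset D r))"

lemma finite_rowset: "finite D \<Longrightarrow> finite (rowset D r)"
proof -
  assume "finite D"
  then have "finite (snd ` D)" by simp
  moreover have "rowset D r \<subseteq> snd ` D" by (force simp: rowset_def)
  ultimately show ?thesis by (rule finite_subset[rotated])
qed

lemma reading_word_N:
  assumes pd: "pipe_dream D" and N: "\<forall>(r,c)\<in>D. r < N" "1 \<le> N"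
  shows "reading_word D = concat (map (roww D) [1..<N])"
proof -
  let ?M = "Max (insert 0 (fst ` D))"
  have fD: "finite D" using pd by (simp add: pipe_dream_def)
  have M: "?M < N" using fD N by (auto simp: Max_less_iff)
  have le: "(r, c) \<in> D \<Longrightarrow> r \<le> ?M" for r c using fD by (force intro: Max_ge)
  have sp: "[1..<N] = [1..<Suc ?M] @ [Suc ?M..<N]"
    using M upt_add_eq_append[of 1 "Suc ?M" "N - Suc ?M"] by simp
  have "roww D r = []" if "r \<in> set [Suc ?M..<N]" for r
  proof -
    have "rowset D r = {}" using that le by (force simp: rowset_def)
    then show ?thesis by (simp add: roww_def desc_def)
  qed
  then have "concat (map (roww D) [Suc ?M..<N]) = []" by simp
  then show ?thesis unfolding sp reading_word_def roww_def rowset_def desc_def by simp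
qed

lemma upt_split3: "1 \<le> i \<Longrightarrow> Suc (Suc i) \<le> N \<Longrightarrow> [1..<N] = [1..<i] @ i # Suc i # [Suc (Suc i)..<N]"
proof -
  assume a: "1 \<le> i" "Suc (Suc i) \<le> N"
  have "[1..<N] = [1..<i] @ [i..<N]" using a upt_add_eq_append[of 1 i "N - i"] by simp
  also have "[i..<N] = i # Suc i # [Suc (Suc i)..<N]" using a by (simp add: upt_conv_Cons)
  finally show ?thesis .
qed

lemma roww_letters: "pipe_dream D \<Longrightarrow> a \<in> set (roww D r) \<Longrightarrow> r \<le> a"
proof -
  assume pd: "pipe_dream D" and a: "a \<in> set (roww D r)"
  have f: "finite D" using pd by (simp add: pipe_dream_def)
  from a obtain c where c: "c \<in> rowset D r" "a = r + c - 1"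
    using finite_rowset[OF f] by (auto simp: roww_def)
  then have "0 < c" using pd by (auto simp: pipe_dream_def rowset_def)
  then show ?thesis using c by simp
qed

lemma demazure_h:
  assumes pd: "pipe_dream D" and N: "\<forall>(r,c)\<in>D. r < N" "1 \<le> N"
  shows "demazure D = foldl h id (concat (map (roww D) [1..<N]))"
proof -
  have "id \<in> Sinf" unfolding Sinf_def by (auto intro!: exI[of _ "[]"])
  moreover have "\<forall>a\<in>set (concat (map (roww D) [1..<N])). 1 \<le> a"
    using roww_letters[OF pd] by (fastforce simp: Suc_le_eq)
  ultimately show ?thesis using foldl_dstar_h reading_word_N[OF assms]
    by (simp add: demazure_def)
qed




lemma start_props:
  assumes "finite D"
  shows "1 \<le> start i D" "(i, start i D) \<notin> D" "\<And>c. 1 \<le> c \<Longrightarrow> c < start i D \<Longrightarrow> (i, c) \<in> D"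
proof -
  let ?c = "Suc (Max (insert 0 (snd ` D)))"
  have "(i, ?c) \<notin> D"
  proof
    assume "(i, ?c) \<in> D"
    then have "?c \<in> insert 0 (snd ` D)" by (metis insertI2 image_eqI snd_conv)
    then have "?c \<le> Max (insert 0 (snd ` D))" using assms by (intro Max_ge) auto
    then show False by simp
  qed
  then have ex: "1 \<le> ?c \<and> (i, ?c) \<notin> D" by simp
  show "1 \<le> start i D" "(i, start i D) \<notin> D" unfolding start_def using LeastI[of "\<lambda>c. 1 \<le> c \<and> (i,c) \<notin> D" ?c, OF ex] by auto
  show "\<And>c. 1 \<le> c \<Longrightarrow> c < start i D \<Longrightarrow> (i, c) \<in> D" unfolding start_def using not_less_Least by blast
qed

lemma mem_Dp: "(r,c) \<in> Dp i D p \<longleftrightarrow>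
   ((r,c) \<in> D \<and> \<not> (r = i \<and> (c = p \<or> (c \<in> Jset i D \<and> c < p)))) \<or> (r = Suc i \<and> c \<in> Jset i D \<and> c < p)"
  unfolding Dp_def by blast

lemma L1_roww: "roww D i = L1 i (rowset D i)" by (simp add: roww_def L1_def)
lemma L2_roww: "roww D (Suc i) = L2 i (rowset D (Suc i))" by (simp add: roww_def L2_def)

lemma rows_lemma:
  assumes pd: "pipe_dream D" and i: "1 \<le> i"
  defines "s0 \<equiv> start i D"
  defines "k \<equiv> s0 - 1"
  defines "A \<equiv> {c\<in>rowset D i. s0 < c}"
  defines "H \<equiv> {c\<in>rowset D (Suc i). s0 \<le> c}"
  defines "K \<equiv> {c\<in>rowset D (Suc i). c < s0}"
  shows "roww D i @ roww D (Suc i) = L1 i A @ down i (i+k) @ L2 i H @ L2 i K"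
    and "p \<in> Jset i D \<Longrightarrow> roww (Dp i D p) i @ roww (Dp i D p) (Suc i) = L1 i A @ Z i k K H p"
    and "p \<in> Jset i D \<Longrightarrow> r \<noteq> i \<Longrightarrow> r \<noteq> Suc i \<Longrightarrow> roww (Dp i D p) r = roww D r"
    and "finite K" "\<forall>c\<in>K. 1 \<le> c \<and> c \<le> k" "finite H" "\<forall>c\<in>H. k < c"
    and "Jset i D = {c. 1 \<le> c \<and> c \<le> k \<and> c \<notin> K}"
proof -
  have fD: "finite D" using pd by (simp add: pipe_dream_def)
  have pos: "(r, c) \<in> D \<Longrightarrow> 0 < r \<and> 0 < c" for r c using pd by (auto simp: pipe_dream_def)
  note st = start_props[OF fD, where i=i, folded s0_def]
  have s0k: "s0 = Suc k" using st(1) by (simp add: k_def)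
  have fR: "finite (rowset D r)" for r using finite_rowset[OF fD] .
  show fK: "finite K" unfolding K_def using fR by simp
  show fH: "finite H" unfolding H_def using fR by simp
  have fA: "finite A" unfolding A_def using fR by simp
  show Kb: "\<forall>c\<in>K. 1 \<le> c \<and> c \<le> k" unfolding K_def rowset_def using pos s0k by (auto simp: Suc_le_eq)
  show Hb: "\<forall>c\<in>H. k < c" unfolding H_def using s0k by auto
  show J: "Jset i D = {c. 1 \<le> c \<and> c \<le> k \<and> c \<notin> K}"
    unfolding Jset_def K_def rowset_def s0_def[symmetric] using s0k by auto
  have R1: "rowset D i = A \<union> {1..<Suc k}"
  proof (intro set_eqI iffI)
    fix x assume x: "x \<in> rowset D i"
    then have "(i, x) \<in> D" by (simp add: rowset_def)
    then have "x \<noteq> s0" "0 < x" using st pos by auto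
    then show "x \<in> A \<union> {1..<Suc k}" using x s0k unfolding A_def by (cases "x < s0") auto
  next
    fix x assume "x \<in> A \<union> {1..<Suc k}"
    then show "x \<in> rowset D i" using st s0k unfolding A_def rowset_def by auto
  qed
  have R2: "rowset D (Suc i) = H \<union> K" unfolding H_def K_def by auto
  show "roww D i @ roww D (Suc i) = L1 i A @ down i (i+k) @ L2 i H @ L2 i K"
  proof -
    have "roww D i = L1 i A @ L1 i {1..<Suc k}"
      unfolding L1_roww R1 by (rule L1_union) (use fA s0k in \<open>auto simp: A_def\<close>)
    moreover have "roww D (Suc i) = L2 i H @ L2 i K"
      unfolding L2_roww R2 by (rule L2_union) (use fH fK in \<open>auto simp: H_def K_def\<close>)
    moreover have "L1 i {1..<Suc k} = down i (i+k)" by (simp add: L1_range)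
    ultimately show ?thesis by simp
  qed
  assume p: "p \<in> Jset i D"
  have "p \<in> {c. 1 \<le> c \<and> c \<le> k \<and> c \<notin> K}" using p unfolding J .
  then have p1: "1 \<le> p" "p \<le> k" "p \<notin> K" by simp_all
  have Jp: "{c. c \<in> Jset i D \<and> c < p} = {c. 1 \<le> c \<and> c < p \<and> c \<notin> K}"
    unfolding J using p1 by auto
  have Jc: "c < p \<Longrightarrow> c \<in> Jset i D \<longleftrightarrow> 1 \<le> c \<and> c \<notin> K" for c
    unfolding J using p1 by auto
  have rD: "rowset (Dp i D p) r = rowset D r" if "r \<noteq> i" "r \<noteq> Suc i" for r
    using that unfolding rowset_def mem_Dp by auto
  then show "r \<noteq> i \<Longrightarrow> r \<noteq> Suc i \<Longrightarrow> roww (Dp i D p) r = roww D r" by (simp add: roww_def)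
  have r1: "rowset (Dp i D p) i = A \<union> ({Suc p..<Suc k} \<union> {c\<in>K. c<p})"
  proof -
    have "rowset (Dp i D p) i = {c. (i,c) \<in> D \<and> c \<noteq> p \<and> \<not> (1 \<le> c \<and> c < p \<and> c \<notin> K)}"
      unfolding rowset_def mem_Dp using Jc by auto
    also have "\<dots> = A \<union> ({Suc p..<Suc k} \<union> {c\<in>K. c<p})"
    proof (intro set_eqI iffI)
      fix x assume x: "x \<in> {c. (i,c) \<in> D \<and> c \<noteq> p \<and> \<not> (1 \<le> c \<and> c < p \<and> c \<notin> K)}"
      then have x1: "(i,x) \<in> D" "x \<noteq> p" "\<not> (1 \<le> x \<and> x < p \<and> x \<notin> K)" by auto
      then have "x \<noteq> s0" "0 < x" using st pos by auto
      then consider "s0 < x" | "p < x \<and> x < s0" | "x < p"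
        using x1(2) by (metis linorder_neqE_nat)
      then show "x \<in> A \<union> ({Suc p..<Suc k} \<union> {c\<in>K. c<p})"
      proof cases
        case 1 then show ?thesis using x1 unfolding A_def rowset_def by auto
      next
        case 2 then show ?thesis using s0k by auto
      next
        case 3 then show ?thesis using x1 \<open>0 < x\<close> by auto
      qed
    next
      fix x assume x: "x \<in> A \<union> ({Suc p..<Suc k} \<union> {c\<in>K. c<p})"
      have ps: "p < s0" using p1 s0k by simp
      show "x \<in> {c. (i,c) \<in> D \<and> c \<noteq> p \<and> \<not> (1 \<le> c \<and> c < p \<and> c \<notin> K)}"
      proof (cases "x \<in> A")
        case True then show ?thesis using ps unfolding A_def rowset_def by auto
      next
        case False
        then have "x \<in> {Suc p..<Suc k} \<or> x \<in> {c\<in>K. c<p}" using x by blast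
        then show ?thesis
        proof
          assume "x \<in> {Suc p..<Suc k}"
          then show ?thesis using st(3)[of x] s0k p1 by auto
        next
          assume xk: "x \<in> {c\<in>K. c<p}"
          then have "1 \<le> x" using Kb by auto
          then show ?thesis using st(3)[of x] xk ps by auto
        qed
      qed
    qed
    finally show ?thesis .
  qed
  have r2: "rowset (Dp i D p) (Suc i) = H \<union> ({c\<in>K. p<c} \<union> {1..<p})"
  proof -
    have "rowset (Dp i D p) (Suc i) = rowset D (Suc i) \<union> {c. 1 \<le> c \<and> c < p \<and> c \<notin> K}"
      unfolding rowset_def mem_Dp using Jc by auto
    also have "\<dots> = H \<union> ({c\<in>K. p<c} \<union> {1..<p})" unfolding R2
    proof (intro set_eqI iffI)
      fix x assume "x \<in> H \<union> K \<union> {c. 1 \<le> c \<and> c < p \<and> c \<notin> K}"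
      moreover have "x \<in> K \<Longrightarrow> x \<noteq> p" using p1 by auto
      ultimately show "x \<in> H \<union> ({c\<in>K. p<c} \<union> {1..<p})" using Kb
        by (metis (mono_tags, lifting) UnCI UnE atLeastLessThan_iff linorder_neqE_nat mem_Collect_eq)
    next
      fix x assume "x \<in> H \<union> ({c\<in>K. p<c} \<union> {1..<p})"
      then show "x \<in> H \<union> K \<union> {c. 1 \<le> c \<and> c < p \<and> c \<notin> K}" by auto
    qed
    finally show ?thesis .
  qed
  have w1: "roww (Dp i D p) i = L1 i A @ down (i+p) (i+k) @ L1 i {c\<in>K. c<p}"
  proof -
    have "roww (Dp i D p) i = L1 i A @ L1 i ({Suc p..<Suc k} \<union> {c\<in>K. c<p})"
      unfolding L1_roww r1 by (rule L1_union) (use fA fK s0k p1 in \<open>auto simp: A_def\<close>)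
    also have "L1 i ({Suc p..<Suc k} \<union> {c\<in>K. c<p}) = L1 i {Suc p..<Suc k} @ L1 i {c\<in>K. c<p}"
      by (rule L1_union) (use fK in auto)
    also have "L1 i {Suc p..<Suc k} = down (i+p) (i+k)" by (simp add: L1_range)
    finally show ?thesis .
  qed
  have w2: "roww (Dp i D p) (Suc i) = L2 i H @ L2 i {c\<in>K. p<c} @ down (i+1) (i+p)"
  proof -
    have "roww (Dp i D p) (Suc i) = L2 i H @ L2 i ({c\<in>K. p<c} \<union> {1..<p})"
      unfolding L2_roww r2 by (rule L2_union) (use fH fK Kb Hb p1 s0k in \<open>auto simp: H_def K_def\<close>)
    also have "L2 i ({c\<in>K. p<c} \<union> {1..<p}) = L2 i {c\<in>K. p<c} @ L2 i {1..<p}"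
      by (rule L2_union) (use fK in auto)
    also have "L2 i {1..<p} = down (i+1) (i+p)" by (simp add: L2_range)
    finally show ?thesis .
  qed
  show "roww (Dp i D p) i @ roww (Dp i D p) (Suc i) = L1 i A @ Z i k K H p"
    using w1 w2 by (simp add: Z_def)
qed




lemma rows_ex:
  assumes "pipe_dream D" "1 \<le> i"
  shows "\<exists>A H K k. finite K \<and> (\<forall>c\<in>K. 1 \<le> c \<and> c \<le> k) \<and> finite H \<and> (\<forall>c\<in>H. k < c)
    \<and> Jset i D = {c. 1 \<le> c \<and> c \<le> k \<and> c \<notin> K}
    \<and> roww D i @ roww D (Suc i) = L1 i A @ down i (i+k) @ L2 i H @ L2 i K
    \<and> (\<forall>p\<in>Jset i D. roww (Dp i D p) i @ roww (Dp i D p) (Suc i) = L1 i A @ Z i k K H p)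
    \<and> (\<forall>p\<in>Jset i D. \<forall>r. r \<noteq> i \<longrightarrow> r \<noteq> Suc i \<longrightarrow> roww (Dp i D p) r = roww D r)"
proof -
  note R = rows_lemma[OF assms]
  show ?thesis
    apply (rule exI[of _ "{c\<in>rowset D i. start i D < c}"])
    apply (rule exI[of _ "{c\<in>rowset D (Suc i). start i D \<le> c}"])
    apply (rule exI[of _ "{c\<in>rowset D (Suc i). c < start i D}"])
    apply (rule exI[of _ "start i D - 1"])
    apply (intro conjI ballI allI impI)
    using R by simp_all
qed

lemma split_word:
  assumes "1 \<le> i" "Suc (Suc i) \<le> N"
  shows "concat (map (roww E) [1..<N]) =
    concat (map (roww E) [1..<i]) @ (roww E i @ roww E (Suc i)) @ concat (map (roww E) [Suc (Suc i)..<N])"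
  using upt_split3[OF assms] by simp

theorem main:
  fixes w :: "nat \<Rightarrow> nat" and i :: nat and D :: "(nat \<times> nat) set"
  assumes i: "1 \<le> i" and DP: "D \<in> PD w" and ne: "mitosis i D \<noteq> {}"
  shows "mitosis i D \<subseteq> PD (w \<circ> s i) \<or> mitosis i D \<subseteq> PD w"
proof -
  have pd: "pipe_dream D" and dw: "demazure D = w" using DP by (auto simp: PD_def)
  have fD: "finite D" using pd by (simp add: pipe_dream_def)
  obtain A H K k where fK: "finite K" and Kb: "\<forall>c\<in>K. 1 \<le> c \<and> c \<le> k" and fH: "finite H"
    and Hb: "\<forall>c\<in>H. k < c" and J: "Jset i D = {c. 1 \<le> c \<and> c \<le> k \<and> c \<notin> K}"
    and RD: "roww D i @ roww D (Suc i) = L1 i A @ down i (i+k) @ L2 i H @ L2 i K"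
    and RP': "\<forall>p\<in>Jset i D. roww (Dp i D p) i @ roww (Dp i D p) (Suc i) = L1 i A @ Z i k K H p"
    and RO': "\<forall>p\<in>Jset i D. \<forall>r. r \<noteq> i \<longrightarrow> r \<noteq> Suc i \<longrightarrow> roww (Dp i D p) r = roww D r"
    using rows_ex[OF pd i] by (elim exE conjE) blast
  have RP: "\<And>p. p \<in> Jset i D \<Longrightarrow> roww (Dp i D p) i @ roww (Dp i D p) (Suc i) = L1 i A @ Z i k K H p"
    using RP' by blast
  have RO: "\<And>p r. p \<in> Jset i D \<Longrightarrow> r \<noteq> i \<Longrightarrow> r \<noteq> Suc i \<Longrightarrow> roww (Dp i D p) r = roww D r"
    using RO' by blast
  define N where "N = Suc (Suc (Suc i)) + Max (insert 0 (fst ` D))"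
  have N1: "1 \<le> N" "Suc (Suc i) \<le> N" by (auto simp: N_def)
  have rD: "\<forall>(r,c)\<in>D. r < N"
  proof (clarify)
    fix r c assume "(r,c) \<in> D"
    then have "r \<in> insert 0 (fst ` D)" by force
    then have "r \<le> Max (insert 0 (fst ` D))" using fD by (intro Max_ge) auto
    then show "r < N" by (simp add: N_def)
  qed
  define pre where "pre = concat (map (roww D) [1..<i])"
  define suf where "suf = concat (map (roww D) [Suc (Suc i)..<N])"
  have dD: "w = foldl h id (pre @ (L1 i A @ down i (i+k) @ L2 i H @ L2 i K) @ suf)"
    using dw demazure_h[OF pd rD N1(1)] split_word[OF i N1(2), of D] RD
    unfolding pre_def suf_def by simp
  have sufl: "\<forall>x\<in>set suf. far x i"
  proof
    fix x assume "x \<in> set suf"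
    then obtain r where "r \<in> {Suc (Suc i)..<N}" "x \<in> set (roww D r)" unfolding suf_def by auto
    then have "Suc (Suc i) \<le> x" using roww_letters[OF pd] by fastforce
    then show "far x i" by (simp add: far_def)
  qed
  have mem: "p \<in> Jset i D \<Longrightarrow> 1 \<le> p \<and> p \<le> k \<and> p \<notin> K" for p using J by auto
  have pdp: "pipe_dream (Dp i D p)" and rDp: "\<forall>(r,c)\<in>Dp i D p. r < N" if p: "p \<in> Jset i D" for p
  proof -
    have sub: "Dp i D p \<subseteq> D \<union> ({Suc i} \<times> {..<p})" by (auto simp: mem_Dp)
    have "finite (D \<union> ({Suc i} \<times> {..<p}))" using fD by simp
    then have "finite (Dp i D p)" using sub by (rule finite_subset[rotated])
    moreover have "\<forall>(r,c)\<in>Dp i D p. 0 < r \<and> 0 < c"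
      using pd J by (auto simp: mem_Dp pipe_dream_def)
    ultimately show "pipe_dream (Dp i D p)" by (simp add: pipe_dream_def)
    show "\<forall>(r,c)\<in>Dp i D p. r < N" using rD N1 by (auto simp: mem_Dp)
  qed
  have dP: "demazure (Dp i D p) = foldl h id (pre @ (L1 i A @ Z i k K H p) @ suf)" if p: "p \<in> Jset i D" for p
  proof -
    have e1: "concat (map (roww (Dp i D p)) [1..<i]) = pre"
      unfolding pre_def using RO[OF p] by (intro arg_cong[where f=concat] map_cong) auto
    have e2: "concat (map (roww (Dp i D p)) [Suc (Suc i)..<N]) = suf"
      unfolding suf_def using RO[OF p] by (intro arg_cong[where f=concat] map_cong) auto
    have "demazure (Dp i D p) = foldl h id (concat (map (roww (Dp i D p)) [1..<N]))"
      by (rule demazure_h[OF pdp[OF p] rDp[OF p] N1(1)])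
    also have "\<dots> = foldl h id (pre @ (roww (Dp i D p) i @ roww (Dp i D p) (Suc i)) @ suf)"
      unfolding split_word[OF i N1(2)] e1 e2 ..
    also have "\<dots> = foldl h id (pre @ (L1 i A @ Z i k K H p) @ suf)" unfolding RP[OF p] ..
    finally show ?thesis .
  qed
  have key: "w = h (demazure (Dp i D p)) i" if p: "p \<in> Jset i D" for p
  proof -
    note m = mem[OF p]
    have "pre @ (L1 i A @ down i (i+k) @ L2 i H @ L2 i K) @ suf
        = (pre @ L1 i A) @ (down i (i+k) @ L2 i H @ L2 i K) @ suf" by simp
    also have "\<dots> \<approx> (pre @ L1 i A) @ (Z i k K H p @ [i]) @ suf"
      using rows1[OF fK Kb fH Hb m[THEN conjunct1] m[THEN conjunct2, THEN conjunct1] m[THEN conjunct2, THEN conjunct2], of i]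
      by (intro cancel) (simp add: Z_def)
    also have "\<dots> = (pre @ L1 i A @ Z i k K H p) @ ([i] @ suf) @ []" by simp
    also have "\<dots> \<approx> (pre @ L1 i A @ Z i k K H p) @ (suf @ [i]) @ []"
      using comm1[OF sufl] eqw_sym by (intro cancel) simp
    finally have "w = foldl h id ((pre @ L1 i A @ Z i k K H p @ suf) @ [i])"
      using dD by (simp add: eqw_def)
    then show ?thesis using dP[OF p] by simp
  qed
  have same: "demazure (Dp i D p) = demazure (Dp i D q)" if p: "p \<in> Jset i D" and q: "q \<in> Jset i D" for p q
  proof -
    have "Z i k K H p \<approx> Z i k K H q"
    proof (cases p q rule: linorder_cases)
      case less then show ?thesis using rows2[OF fK Kb fH Hb] mem[OF p] mem[OF q] by simp
    next
      case equal then show ?thesis by simp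
    next
      case greater then show ?thesis using rows2[OF fK Kb fH Hb] mem[OF p] mem[OF q] eqw_sym by blast
    qed
    then have "pre @ (L1 i A @ Z i k K H p) @ suf \<approx> pre @ (L1 i A @ Z i k K H q) @ suf"
      by (intro cancel eqw_appL)
    then show ?thesis using dP[OF p] dP[OF q] by (simp add: eqw_def)
  qed
  obtain p0 where p0: "p0 \<in> Jset i D" using ne by (auto simp: mitosis_def)
  define y where "y = demazure (Dp i D p0)"
  have allE: "E \<in> mitosis i D \<Longrightarrow> pipe_dream E \<and> demazure E = y" for E
  proof -
    assume "E \<in> mitosis i D"
    then obtain p where p: "p \<in> Jset i D" "E = Dp i D p" unfolding mitosis_def by blast
    show ?thesis using p same[OF p(1) p0] pdp[OF p(1)] unfolding y_def by simp
  qed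
  have wy: "w = h y i" using key[OF p0] y_def by simp
  show ?thesis
  proof (cases "y i < y (Suc i)")
    case True
    then have "w = y \<circ> s i" using wy by (simp add: h_def)
    then have "w \<circ> s i = y" by (simp add: comp_assoc s_comp_s)
    then have "mitosis i D \<subseteq> PD (w \<circ> s i)" using allE by (auto simp: PD_def)
    then show ?thesis ..
  next
    case False
    then have "w = y" using wy by (simp add: h_def)
    then have "mitosis i D \<subseteq> PD w" using allE by (auto simp: PD_def)
    then show ?thesis ..
  qed
qed


theorem theorem2p3:
  fixes w :: "nat \<Rightarrow> nat" and i :: nat and D :: "(nat \<times> nat) set"
  assumes "w \<in> Sinf" and "1 \<le> i"
    and "int (len (w \<circ> s i)) = int (len w) - 1"
    and "D \<in> PD w"
    and "mitosis i D \<noteq> {}"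
  shows "mitosis i D \<subseteq> PD (w \<circ> s i) \<or> mitosis i D \<subseteq> PD w"
  using main[OF assms(2) assms(4) assms(5)] .

end
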